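(* For any $\Delta:N\setminus\{0\}\to\mathbb N$ and any $g\in\mathbb N$, the set of types $(\Gamma,u)$ of tropical curves of degree $\Delta$ and genus $g$ that are realized by at least one tropical curve (i.e. $\mathcal T_{(\Gamma,u)}\neq\emptyset$) is finite.
   Context: $N$ is a free abelian group of rank $n\ge2$, $N_\mathbb Q=N\otimes\mathbb Q$, $N_\mathbb R=N\otimes\mathbb R$. An open graph $\Gamma$ is obtained from a connected finite graph without divalent vertices by deleting its univalent vertices; vertices $\Gamma^{[0]}$, edges $\Gamma^{[1]}$, unbounded (non-compact) edges $\Gamma^{[1]}_\infty$, weights $w:\Gamma^{[1]}\to\mathbb Z_{>0}$; flags are pairs $(V,E)$ with $V$ an endpoint of $E$. A tropical curve is (an isomorphism class of) a proper map $h:\Gamma\to N_\mathbb R$ such that each $h|_E$ is an embedding into an affine line of rational slope, $h(V)\in N_\mathbb Q$, and at each vertex $\sum_{E\ni V}w(E)u_{(V,E)}=0$, where $u_{(V,E)}\in N$ is the primitive vector from $h(V)$ in the direction of $h(E)$. Its type is the weighted graph $\Gamma$ together with the map $u$ on flags; $\mathcal T_{(\Gamma,u)}$ is the set of tropical curves of that type. Genus $=b_1(\Gamma)$. Degree: $\Delta(v)=\#\{E\in\Gamma^{[1]}_\infty:w(E)u_{(V,E)}=v\}$, $V$ the vertex of $E$. *)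

theory Defs
  imports "HOL-Analysis.Analysis"
begin

text \<open>The lattice N is int ^ 'n (rank CARD('n)); N_R is real ^ 'n.
  A type of tropical curve is encoded combinatorially with vertices and edges labelled by
  natural numbers.  ends e is the set of endpoints of edge e (two for a bounded edge,
  one for an unbounded edge), wt is the weight, dir v e is the primitive vector u_(v,e)
  attached to the flag (v,e).\<close>

record ('n::finite) trop_type =
  tverts :: "nat set"
  tedges :: "nat set"
  tunb   :: "nat set"
  tends  :: "nat \<Rightarrow> nat set"
  twt    :: "nat \<Rightarrow> nat"
  tdir   :: "nat \<Rightarrow> nat \<Rightarrow> int ^ 'n"

definition primitive_vec :: "int ^ ('n::finite) \<Rightarrow> bool" where
  "primitive_vec v \<longleftrightarrow> v \<noteq> 0 \<and> (\<forall>(k::int) w. v = k *s w \<longrightarrow> \<bar>k\<bar> = 1)"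

definition bounded_edges :: "('n::finite) trop_type \<Rightarrow> nat set" where
  "bounded_edges T = tedges T - tunb T"

definition flag_count :: "('n::finite) trop_type \<Rightarrow> nat \<Rightarrow> nat" where
  "flag_count T v = card {e \<in> tedges T. v \<in> tends T e}"

text \<open>Open graph: finite, connected, nonempty vertex set, no vertex of valence 1 or 2
  (univalent vertices were removed, divalent ones are excluded), bounded edges have two
  distinct endpoints, unbounded edges have exactly one endpoint; positive weights;
  u is a primitive vector on every flag.\<close>
definition is_trop_type :: "('n::finite) trop_type \<Rightarrow> bool" where
  "is_trop_type T \<longleftrightarrow>
     finite (tverts T) \<and> finite (tedges T) \<and> tverts T \<noteq> {} \<and> tunb T \<subseteq> tedges T \<and>
     (\<forall>e\<in>tedges T. tends T e \<subseteq> tverts T) \<and>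
     (\<forall>e\<in>bounded_edges T. card (tends T e) = 2) \<and>
     (\<forall>e\<in>tunb T. card (tends T e) = 1) \<and>
     (\<forall>a\<in>tverts T. \<forall>b\<in>tverts T.
        (a, b) \<in> {(x, y). \<exists>e\<in>bounded_edges T. tends T e = {x, y}}\<^sup>*) \<and>
     (\<forall>v\<in>tverts T. flag_count T v \<noteq> 1 \<and> flag_count T v \<noteq> 2) \<and>
     (\<forall>e\<in>tedges T. twt T e > 0) \<and>
     (\<forall>e\<in>tedges T. \<forall>v\<in>tends T e. primitive_vec (tdir T v e))"

definition real_vec :: "int ^ ('n::finite) \<Rightarrow> real ^ 'n" where
  "real_vec u = (\<chi> i. real_of_int (u $ i))"

definition rat_point :: "real ^ ('n::finite) \<Rightarrow> bool" where
  "rat_point x \<longleftrightarrow> (\<forall>i. x $ i \<in> \<rat>)"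

text \<open>A tropical curve of type T: positions h v in N_Q of the vertices such that every
  bounded edge is mapped to a nondegenerate segment whose primitive directions at its two
  ends are the prescribed ones (unbounded edges are then the rays h v + R_{\<ge>0} u_(v,e)),
  and the balancing condition holds at every vertex.\<close>
definition is_trop_curve :: "('n::finite) trop_type \<Rightarrow> (nat \<Rightarrow> real ^ 'n) \<Rightarrow> bool" where
  "is_trop_curve T h \<longleftrightarrow>
     (\<forall>v\<in>tverts T. rat_point (h v)) \<and>
     (\<forall>e\<in>bounded_edges T. \<forall>a b. tends T e = {a, b} \<and> a \<noteq> b \<longrightarrow>
        (\<exists>l::real. l > 0 \<and> h b - h a = l *\<^sub>R real_vec (tdir T a e)
                          \<and> h a - h b = l *\<^sub>R real_vec (tdir T b e))) \<and>
     (\<forall>v\<in>tverts T. (\<Sum>e\<in>{e \<in> tedges T. v \<in> tends T e}. int (twt T e) *s tdir T v e) = 0)"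

definition realizable :: "('n::finite) trop_type \<Rightarrow> bool" where
  "realizable T \<longleftrightarrow> (\<exists>h. is_trop_curve T h)"

definition trop_genus :: "('n::finite) trop_type \<Rightarrow> int" where
  "trop_genus T = int (card (bounded_edges T)) - int (card (tverts T)) + 1"

definition has_degree :: "(int ^ 'n \<Rightarrow> nat) \<Rightarrow> ('n::finite) trop_type \<Rightarrow> bool" where
  "has_degree \<Delta> T \<longleftrightarrow> (\<forall>v. v \<noteq> 0 \<longrightarrow>
     \<Delta> v = card {e \<in> tunb T. \<exists>x\<in>tends T e. int (twt T e) *s tdir T x e = v})"

definition type_iso :: "('n::finite) trop_type \<Rightarrow> ('n::finite) trop_type \<Rightarrow> bool" where
  "type_iso T T' \<longleftrightarrow> (\<exists>\<sigma> \<tau>.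
     bij_betw \<sigma> (tverts T) (tverts T') \<and> bij_betw \<tau> (tedges T) (tedges T') \<and>
     \<tau> ` tunb T = tunb T' \<and>
     (\<forall>e\<in>tedges T. tends T' (\<tau> e) = \<sigma> ` tends T e \<and> twt T' (\<tau> e) = twt T e \<and>
        (\<forall>v\<in>tends T e. tdir T' (\<sigma> v) (\<tau> e) = tdir T v e)))"

end

theory Submission
  imports Defs
begin

definition suppD :: "(int ^ 'n \<Rightarrow> nat) \<Rightarrow> (int ^ ('n::finite)) set" where
  "suppD \<Delta> = {v. v \<noteq> 0 \<and> \<Delta> v > 0}"

lemma prim_nz: "primitive_vec v \<Longrightarrow> v \<noteq> 0"
  by (simp add: primitive_vec_def)

lemma unb_ends_finite:
  assumes "is_trop_type T" "e \<in> tunb T"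
  shows "finite (tends T e)" "\<exists>x. tends T e = {x}"
proof -
  have "card (tends T e) = 1" using assms by (simp add: is_trop_type_def)
  then show "finite (tends T e)" "\<exists>x. tends T e = {x}"
    by (auto simp: card_1_singleton_iff)
qed

lemma deg_facts:
  fixes T :: "('n::finite) trop_type"
  assumes tt: "is_trop_type T" and hd: "has_degree \<Delta> T"
  shows "\<forall>e\<in>tunb T. \<forall>x\<in>tends T e. int (twt T e) *s tdir T x e \<in> suppD \<Delta>"
    and "finite (suppD \<Delta>)"
    and "card (tunb T) \<le> (\<Sum>v\<in>suppD \<Delta>. \<Delta> v)"
proof -
  let ?wu = "\<lambda>x e. int (twt T e) *s tdir T x e"
  define F where "F v = {e \<in> tunb T. \<exists>x\<in>tends T e. ?wu x e = v}" for v
  have finU: "finite (tunb T)" using tt by (auto simp: is_trop_type_def intro: finite_subset)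
  have DF: "\<Delta> v = card (F v)" if "v \<noteq> 0" for v
    using hd that by (simp add: has_degree_def F_def)
  show A: "\<forall>e\<in>tunb T. \<forall>x\<in>tends T e. ?wu x e \<in> suppD \<Delta>"
  proof (intro ballI)
    fix e x assume e: "e \<in> tunb T" and x: "x \<in> tends T e"
    have eE: "e \<in> tedges T" using tt e by (auto simp: is_trop_type_def)
    have w: "twt T e > 0" using tt eE by (auto simp: is_trop_type_def)
    have "primitive_vec (tdir T x e)" using tt eE x by (auto simp: is_trop_type_def)
    then have u: "tdir T x e \<noteq> 0" by (rule prim_nz)
    have nz: "?wu x e \<noteq> 0"
    proof
      assume "?wu x e = 0"
      then have "\<forall>i. int (twt T e) * tdir T x e $ i = 0" by (simp add: vec_eq_iff)
      with w have "\<forall>i. tdir T x e $ i = 0" by simp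
      with u show False by (simp add: vec_eq_iff)
    qed
    have "e \<in> F (?wu x e)" using e x by (auto simp: F_def)
    moreover have "finite (F (?wu x e))" using finU by (simp add: F_def)
    ultimately have "card (F (?wu x e)) > 0" by (auto simp: card_gt_0_iff)
    then show "?wu x e \<in> suppD \<Delta>" using DF[OF nz] nz by (simp add: suppD_def)
  qed
  have sub: "suppD \<Delta> \<subseteq> (\<Union>e\<in>tunb T. (\<lambda>x. ?wu x e) ` tends T e)"
  proof
    fix v assume "v \<in> suppD \<Delta>"
    then have "v \<noteq> 0" "\<Delta> v > 0" by (auto simp: suppD_def)
    then have "F v \<noteq> {}" using DF by fastforce
    then show "v \<in> (\<Union>e\<in>tunb T. (\<lambda>x. ?wu x e) ` tends T e)" by (auto simp: F_def)
  qed
  show finS: "finite (suppD \<Delta>)"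
    by (rule finite_subset[OF sub]) (use finU unb_ends_finite[OF tt] in auto)
  have "tunb T \<subseteq> (\<Union>v\<in>suppD \<Delta>. F v)"
  proof
    fix e assume e: "e \<in> tunb T"
    obtain x where x: "tends T e = {x}" using unb_ends_finite[OF tt e] by blast
    have "e \<in> F (?wu x e)" using e x by (auto simp: F_def)
    moreover have "?wu x e \<in> suppD \<Delta>" using A e x by auto
    ultimately show "e \<in> (\<Union>v\<in>suppD \<Delta>. F v)" by blast
  qed
  then have "card (tunb T) \<le> card (\<Union>v\<in>suppD \<Delta>. F v)"
    by (rule card_mono[rotated]) (use finS finU in \<open>auto simp: F_def\<close>)
  also have "\<dots> \<le> (\<Sum>v\<in>suppD \<Delta>. card (F v))" by (rule card_UN_le[OF finS])
  also have "\<dots> = (\<Sum>v\<in>suppD \<Delta>. \<Delta> v)" by (rule sum.cong) (auto simp: DF suppD_def)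
  finally show "card (tunb T) \<le> (\<Sum>v\<in>suppD \<Delta>. \<Delta> v)" .
qed

lemma flag_sum:
  fixes T :: "('n::finite) trop_type"
  assumes tt: "is_trop_type T"
  shows "(\<Sum>v\<in>tverts T. flag_count T v) = 2 * card (bounded_edges T) + card (tunb T)"
proof -
  have fV: "finite (tverts T)" and fE: "finite (tedges T)" and UE: "tunb T \<subseteq> tedges T"
    and sub: "\<And>e. e \<in> tedges T \<Longrightarrow> tends T e \<subseteq> tverts T"
    using tt by (auto simp: is_trop_type_def)
  have "(\<Sum>v\<in>tverts T. flag_count T v) = (\<Sum>v\<in>tverts T. \<Sum>e\<in>{e\<in>tedges T. v \<in> tends T e}. (1::nat))"
    by (simp add: flag_count_def)
  also have "\<dots> = (\<Sum>e\<in>tedges T. \<Sum>v\<in>{v\<in>tverts T. v \<in> tends T e}. (1::nat))"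
    by (rule sum.swap_restrict[OF fV fE])
  also have "\<dots> = (\<Sum>e\<in>tedges T. card (tends T e))"
  proof (rule sum.cong[OF refl])
    fix e assume "e \<in> tedges T"
    then have "{v\<in>tverts T. v \<in> tends T e} = tends T e" using sub by auto
    then show "(\<Sum>v\<in>{v\<in>tverts T. v \<in> tends T e}. (1::nat)) = card (tends T e)" by simp
  qed
  also have "\<dots> = (\<Sum>e\<in>bounded_edges T. card (tends T e)) + (\<Sum>e\<in>tunb T. card (tends T e))"
  proof -
    have "tedges T = bounded_edges T \<union> tunb T" using UE by (auto simp: bounded_edges_def)
    moreover have "bounded_edges T \<inter> tunb T = {}" by (auto simp: bounded_edges_def)
    ultimately show ?thesis using fE
      by (metis finite_Un sum.union_disjoint)
  qed
  also have "\<dots> = (\<Sum>e\<in>bounded_edges T. 2) + (\<Sum>e\<in>tunb T. 1)"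
    using tt by (intro arg_cong2[where f="(+)"] sum.cong) (auto simp: is_trop_type_def)
  finally show ?thesis by simp
qed

lemma vert_edge_bound:
  fixes T :: "('n::finite) trop_type"
  assumes tt: "is_trop_type T" and gen: "trop_genus T = int g"
  shows "card (tverts T) \<le> 2 * g + card (tunb T) + 1"
    and "card (tedges T) \<le> card (tverts T) + g + card (tunb T)"
proof -
  have fV: "finite (tverts T)" and fE: "finite (tedges T)" and UE: "tunb T \<subseteq> tedges T"
    and Vne: "tverts T \<noteq> {}"
    using tt by (auto simp: is_trop_type_def)
  have cE: "card (tedges T) = card (bounded_edges T) + card (tunb T)"
    using card_Diff_subset[OF finite_subset[OF UE fE] UE] card_mono[OF fE UE]
    by (simp add: bounded_edges_def)
  have cV: "card (tverts T) > 0" using fV Vne by (simp add: card_gt_0_iff)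
  have cB: "int (card (bounded_edges T)) + 1 = int (card (tverts T)) + int g"
    using gen by (simp add: trop_genus_def)
  show "card (tedges T) \<le> card (tverts T) + g + card (tunb T)" using cE cB by linarith
  show "card (tverts T) \<le> 2 * g + card (tunb T) + 1"
  proof (cases "card (tverts T) \<le> 1")
    case True then show ?thesis by simp
  next
    case False
    have fc: "flag_count T v \<ge> 3" if v: "v \<in> tverts T" for v
    proof -
      have "\<exists>w\<in>tverts T. w \<noteq> v"
      proof (rule ccontr)
        assume "\<not> ?thesis"
        then have "tverts T \<subseteq> {v}" by auto
        then have "card (tverts T) \<le> 1" using card_mono[of "{v}"] by fastforce
        with False show False by simp
      qed
      then obtain w where w: "w \<in> tverts T" "w \<noteq> v" by blast
      let ?R = "{(x, y). \<exists>e\<in>bounded_edges T. tends T e = {x, y}}"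
      have "(v, w) \<in> ?R\<^sup>*" using tt v w by (simp add: is_trop_type_def)
      then obtain y where "(v, y) \<in> ?R"
        by (rule converse_rtranclE) (use w in auto)
      then obtain e where e: "e \<in> bounded_edges T" "tends T e = {v, y}" by auto
      have "e \<in> {e\<in>tedges T. v \<in> tends T e}" using e by (auto simp: bounded_edges_def)
      moreover have "finite {e\<in>tedges T. v \<in> tends T e}" using fE by simp
      ultimately have "flag_count T v \<noteq> 0" unfolding flag_count_def by (metis card_0_eq empty_iff)
      moreover have "flag_count T v \<noteq> 1" "flag_count T v \<noteq> 2" using tt v by (auto simp: is_trop_type_def)
      ultimately show ?thesis by linarith
    qed
    have "3 * card (tverts T) = (\<Sum>v\<in>tverts T. 3)" by simp
    also have "\<dots> \<le> (\<Sum>v\<in>tverts T. flag_count T v)" by (rule sum_mono) (rule fc)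
    also have "\<dots> = 2 * card (bounded_edges T) + card (tunb T)" by (rule flag_sum[OF tt])
    finally show ?thesis using cB by linarith
  qed
qed

lemma edge_geom:
  fixes T :: "('n::finite) trop_type"
  assumes hc: "is_trop_curve T h" and e: "e \<in> bounded_edges T"
    and xy: "tends T e = {x, y}" "x \<noteq> y"
  shows "\<exists>l>0. \<forall>i. h y $ i - h x $ i = l * real_of_int (tdir T x e $ i)
                 \<and> tdir T y e $ i = - tdir T x e $ i"
proof -
  obtain l :: real where l: "l > 0" "h y - h x = l *\<^sub>R real_vec (tdir T x e)"
     "h x - h y = l *\<^sub>R real_vec (tdir T y e)"
    using hc e xy unfolding is_trop_curve_def by blast
  have "\<forall>i. h y $ i - h x $ i = l * real_of_int (tdir T x e $ i)
                 \<and> tdir T y e $ i = - tdir T x e $ i"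
  proof
    fix i
    have 1: "h y $ i - h x $ i = l * real_of_int (tdir T x e $ i)"
      using arg_cong[OF l(2), of "\<lambda>v. v $ i"] by (simp add: real_vec_def)
    have 2: "h x $ i - h y $ i = l * real_of_int (tdir T y e $ i)"
      using arg_cong[OF l(3), of "\<lambda>v. v $ i"] by (simp add: real_vec_def)
    from 1 2 have "l * (real_of_int (tdir T x e $ i) + real_of_int (tdir T y e $ i)) = 0"
      by (simp add: algebra_simps)
    with l(1) have "real_of_int (tdir T x e $ i + tdir T y e $ i) = 0" by simp
    then have "tdir T y e $ i = - tdir T x e $ i" by linarith
    with 1 show "h y $ i - h x $ i = l * real_of_int (tdir T x e $ i)
                 \<and> tdir T y e $ i = - tdir T x e $ i" by simp
  qed
  with l(1) show ?thesis by blast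
qed

lemma flux:
  fixes T :: "('n::finite) trop_type"
  assumes tt: "is_trop_type T" and hc: "is_trop_curve T h"
    and e0: "e0 \<in> bounded_edges T" and qp: "tends T e0 = {q, p}" "q \<noteq> p"
    and lt: "h q $ i < h p $ i"
  shows "- (int (twt T e0) * tdir T p e0 $ i)
           \<le> (\<Sum>e\<in>tunb T. \<Sum>x\<in>tends T e. \<bar>int (twt T e) * tdir T x e $ i\<bar>)"
proof -
  define c where "c v e = int (twt T e) * tdir T v e $ i" for v e
  define S where "S = {v \<in> tverts T. h q $ i < h v $ i}"
  define G where "G e = (\<Sum>v\<in>{v\<in>S. v \<in> tends T e}. c v e)" for e
  have fV: "finite (tverts T)" and fE: "finite (tedges T)" and UE: "tunb T \<subseteq> tedges T"
    and sub: "\<And>e. e \<in> tedges T \<Longrightarrow> tends T e \<subseteq> tverts T"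
    using tt by (auto simp: is_trop_type_def)
  have fS: "finite S" using fV by (simp add: S_def)
  have bal: "(\<Sum>e\<in>{e\<in>tedges T. v \<in> tends T e}. c v e) = 0" if "v \<in> S" for v
  proof -
    have "(\<Sum>e\<in>{e \<in> tedges T. v \<in> tends T e}. int (twt T e) *s tdir T v e) = 0"
      using hc that by (simp add: is_trop_curve_def S_def)
    then have "(\<Sum>e\<in>{e \<in> tedges T. v \<in> tends T e}. int (twt T e) *s tdir T v e) $ i = 0"
      by simp
    then show ?thesis by (simp add: sum_component c_def)
  qed
  have "0 = (\<Sum>v\<in>S. \<Sum>e\<in>{e\<in>tedges T. v \<in> tends T e}. c v e)" using bal by simp
  also have "\<dots> = (\<Sum>e\<in>tedges T. G e)" unfolding G_def by (rule sum.swap_restrict[OF fS fE])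
  finally have sum0: "(\<Sum>e\<in>tedges T. G e) = 0" by simp
  have Gb: "G e \<le> 0" if e: "e \<in> bounded_edges T" for e
  proof -
    have "card (tends T e) = 2" using tt e by (simp add: is_trop_type_def)
    then obtain x y where xy: "tends T e = {x, y}" "x \<noteq> y" by (auto simp: card_2_iff)
    obtain l where l: "l > 0" "\<And>i. h y $ i - h x $ i = l * real_of_int (tdir T x e $ i)"
      "\<And>i. tdir T y e $ i = - tdir T x e $ i"
      using edge_geom[OF hc e xy] by blast
    have cy: "c y e = - c x e" using l(3) by (simp add: c_def)
    show ?thesis
    proof (cases "x \<in> S"; cases "y \<in> S")
      assume "x \<in> S" "y \<in> S"
      then have "{v\<in>S. v \<in> tends T e} = {x, y}" using xy by auto
      then show ?thesis using xy cy by (simp add: G_def)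
    next
      assume a: "x \<in> S" "y \<notin> S"
      then have "{v\<in>S. v \<in> tends T e} = {x}" using xy by auto
      moreover have "y \<in> tverts T" using sub e xy by (auto simp: bounded_edges_def)
      ultimately have "G e = c x e" "h y $ i \<le> h q $ i" "h q $ i < h x $ i"
        using a by (auto simp: G_def S_def)
      then have "l * real_of_int (tdir T x e $ i) < 0" using l(2)[of i] by linarith
      then have "tdir T x e $ i < 0" using l(1) by (simp add: mult_less_0_iff)
      then show ?thesis using \<open>G e = c x e\<close> by (simp add: c_def mult_nonneg_nonpos)
    next
      assume a: "x \<notin> S" "y \<in> S"
      then have "{v\<in>S. v \<in> tends T e} = {y}" using xy by auto
      moreover have "x \<in> tverts T" using sub e xy by (auto simp: bounded_edges_def)
      ultimately have "G e = c y e" "h x $ i \<le> h q $ i" "h q $ i < h y $ i"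
        using a by (auto simp: G_def S_def)
      then have "l * real_of_int (tdir T x e $ i) > 0" using l(2)[of i] by linarith
      then have "tdir T x e $ i > 0" using l(1) by (simp add: zero_less_mult_iff)
      then show ?thesis using \<open>G e = c y e\<close> cy by (simp add: c_def)
    next
      assume "x \<notin> S" "y \<notin> S"
      then have "{v\<in>S. v \<in> tends T e} = {}" using xy by auto
      then show ?thesis unfolding G_def by (metis sum.empty order_refl)
    qed
  qed
  have G0: "G e0 = c p e0"
  proof -
    have "p \<in> tverts T" using sub e0 qp by (auto simp: bounded_edges_def)
    then have "{v\<in>S. v \<in> tends T e0} = {p}" using qp lt by (auto simp: S_def)
    then show ?thesis by (simp add: G_def)
  qed
  have GU: "G e \<le> (\<Sum>x\<in>tends T e. \<bar>c x e\<bar>)" if e: "e \<in> tunb T" for e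
  proof -
    have ft: "finite (tends T e)" using unb_ends_finite[OF tt e] by simp
    have "G e \<le> (\<Sum>v\<in>{v\<in>S. v \<in> tends T e}. \<bar>c v e\<bar>)" unfolding G_def by (rule sum_mono) simp
    also have "\<dots> \<le> (\<Sum>x\<in>tends T e. \<bar>c x e\<bar>)" by (rule sum_mono2[OF ft]) auto
    finally show ?thesis .
  qed
  have fB: "finite (bounded_edges T)" using fE by (simp add: bounded_edges_def)
  have split: "(\<Sum>e\<in>tedges T. G e) = (\<Sum>e\<in>bounded_edges T. G e) + (\<Sum>e\<in>tunb T. G e)"
  proof -
    have "tedges T = bounded_edges T \<union> tunb T" using UE by (auto simp: bounded_edges_def)
    moreover have "bounded_edges T \<inter> tunb T = {}" by (auto simp: bounded_edges_def)
    ultimately show ?thesis using fE by (metis finite_Un sum.union_disjoint)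
  qed
  have "(\<Sum>e\<in>bounded_edges T. G e) = G e0 + (\<Sum>e\<in>bounded_edges T - {e0}. G e)"
    using fB e0 by (simp add: sum.remove)
  also have "\<dots> \<le> G e0" using Gb sum_nonpos[of "bounded_edges T - {e0}" G] by auto
  finally have "(\<Sum>e\<in>bounded_edges T. G e) \<le> c p e0" using G0 by simp
  moreover have "(\<Sum>e\<in>tunb T. G e) \<le> (\<Sum>e\<in>tunb T. \<Sum>x\<in>tends T e. \<bar>c x e\<bar>)"
    by (rule sum_mono) (rule GU)
  ultimately show ?thesis using sum0 split by (simp add: c_def)
qed

definition Kmax :: "(int ^ 'n \<Rightarrow> nat) \<Rightarrow> int" where
  "Kmax \<Delta> = (\<Sum>v\<in>suppD \<Delta>. \<Sum>j\<in>(UNIV::('n::finite) set). \<bar>v $ j\<bar>)"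

lemma Kmax_ge: "finite (suppD \<Delta>) \<Longrightarrow> v \<in> suppD \<Delta> \<Longrightarrow> \<bar>v $ j\<bar> \<le> Kmax \<Delta>"
proof -
  assume f: "finite (suppD \<Delta>)" and v: "v \<in> suppD \<Delta>"
  have "\<bar>v $ j\<bar> \<le> (\<Sum>j\<in>(UNIV::'a set). \<bar>v $ j\<bar>)" by (rule member_le_sum) auto
  also have "\<dots> \<le> Kmax \<Delta>" unfolding Kmax_def
    by (rule member_le_sum[OF v, of "\<lambda>v. \<Sum>j\<in>UNIV. \<bar>v $ j\<bar>"]) (auto intro: sum_nonneg f)
  finally show ?thesis .
qed

lemma Kmax_nonneg: "Kmax \<Delta> \<ge> 0"
  unfolding Kmax_def by (intro sum_nonneg) auto

lemma coord_bound:
  fixes T :: "('n::finite) trop_type"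
  assumes tt: "is_trop_type T" and hc: "is_trop_curve T h" and hd: "has_degree \<Delta> T"
    and e: "e \<in> tedges T" and x: "x \<in> tends T e"
  shows "\<bar>int (twt T e) * tdir T x e $ i\<bar> \<le> int (\<Sum>v\<in>suppD \<Delta>. \<Delta> v) * Kmax \<Delta> + Kmax \<Delta>"
proof -
  define c where "c v e = int (twt T e) * tdir T v e $ i" for v e
  define R where "R = (\<Sum>e\<in>tunb T. \<Sum>x\<in>tends T e. \<bar>c x e\<bar>)"
  define d where "d = (\<Sum>v\<in>suppD \<Delta>. \<Delta> v)"
  note D = deg_facts[OF tt hd]
  have K0: "Kmax \<Delta> \<ge> 0" by (rule Kmax_nonneg)
  have cU: "\<bar>c x e\<bar> \<le> Kmax \<Delta>" if "e \<in> tunb T" "x \<in> tends T e" for x e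
  proof -
    have "int (twt T e) *s tdir T x e \<in> suppD \<Delta>" using D(1) that by blast
    from Kmax_ge[OF D(2) this, of i] show ?thesis by (simp add: c_def)
  qed
  have "R \<le> of_nat (card (tunb T)) * Kmax \<Delta>" unfolding R_def
  proof (rule sum_bounded_above)
    fix e assume e: "e \<in> tunb T"
    obtain x0 where "tends T e = {x0}" using unb_ends_finite[OF tt e] by blast
    then show "(\<Sum>x\<in>tends T e. \<bar>c x e\<bar>) \<le> Kmax \<Delta>" using cU[OF e] by simp
  qed
  also have "\<dots> \<le> int d * Kmax \<Delta>" using D(3) K0 unfolding d_def by (intro mult_right_mono) (simp_all del: of_nat_sum)
  finally have R: "R \<le> int d * Kmax \<Delta>" .
  have dK: "int d * Kmax \<Delta> \<ge> 0" using K0 by simp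
  show ?thesis
  proof (cases "e \<in> tunb T")
    case True
    then show ?thesis using cU[OF True x] dK by (simp add: c_def d_def)
  next
    case False
    then have eb: "e \<in> bounded_edges T" using e by (simp add: bounded_edges_def)
    have "card (tends T e) = 2" using tt eb by (simp add: is_trop_type_def)
    then obtain a b where ab: "tends T e = {a, b}" "a \<noteq> b" by (auto simp: card_2_iff)
    obtain l where l: "l > 0" "\<And>i. h b $ i - h a $ i = l * real_of_int (tdir T a e $ i)"
      "\<And>i. tdir T b e $ i = - tdir T a e $ i"
      using edge_geom[OF hc eb ab] by blast
    have cb: "c b e = - c a e" using l(3) by (simp add: c_def)
    have both: "\<bar>c a e\<bar> \<le> R \<and> \<bar>c b e\<bar> \<le> R"
    proof (cases "h a $ i = h b $ i")
      case True
      then have "l * real_of_int (tdir T a e $ i) = 0" using l(2)[of i] by simp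
      then have "tdir T a e $ i = 0" using l(1) by simp
      moreover have "R \<ge> 0" unfolding R_def by (intro sum_nonneg) auto
      ultimately show ?thesis using cb by (auto simp: c_def)
    next
      case False
      show ?thesis
      proof (cases "h a $ i < h b $ i")
        case True
        have f: "- c b e \<le> R" using flux[OF tt hc eb ab True] by (simp add: c_def R_def)
        have "l * real_of_int (tdir T a e $ i) > 0" using l(2)[of i] True by linarith
        then have "tdir T a e $ i > 0" using l(1) by (simp add: zero_less_mult_iff)
        then have "c a e \<ge> 0" by (simp add: c_def)
        then show ?thesis using f cb by linarith
      next
        case F2: False
        then have lt: "h b $ i < h a $ i" using False by linarith
        have ab': "tends T e = {b, a}" "b \<noteq> a" using ab by auto
        have f: "- c a e \<le> R" using flux[OF tt hc eb ab' lt] by (simp add: c_def R_def)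
        have "l * real_of_int (tdir T a e $ i) < 0" using l(2)[of i] lt by linarith
        then have "tdir T a e $ i < 0" using l(1) by (simp add: mult_less_0_iff)
        then have "c a e \<le> 0" by (simp add: c_def mult_nonneg_nonpos)
        then show ?thesis using f cb by linarith
      qed
    qed
    have "x = a \<or> x = b" using x ab by auto
    then have "\<bar>c x e\<bar> \<le> R" using both by auto
    then show ?thesis using R K0 by (simp add: c_def d_def)
  qed
qed

lemma normalize:
  fixes T :: "('n::finite) trop_type"
  assumes tt: "is_trop_type T" and cV: "card (tverts T) \<le> M" and cE: "card (tedges T) \<le> M"
    and wt: "\<forall>e\<in>tedges T. twt T e \<le> W"
    and dir: "\<forall>e\<in>tedges T. \<forall>v\<in>tends T e. tdir T v e \<in> B" and B0: "0 \<in> B"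
  shows "\<exists>T'. type_iso T T' \<and> tverts T' \<subseteq> {..<M} \<and> tedges T' \<subseteq> {..<M} \<and> tunb T' \<subseteq> {..<M}
     \<and> tends T' \<in> {..<M} \<rightarrow>\<^sub>E Pow {..<M} \<and> twt T' \<in> {..<M} \<rightarrow>\<^sub>E {..W}
     \<and> tdir T' \<in> {..<M} \<rightarrow>\<^sub>E ({..<M} \<rightarrow>\<^sub>E B)"
proof -
  let ?V = "tverts T" and ?E = "tedges T"
  have fV: "finite ?V" and fE: "finite ?E" and UE: "tunb T \<subseteq> ?E"
    and sub: "\<And>e. e \<in> ?E \<Longrightarrow> tends T e \<subseteq> ?V"
    using tt by (auto simp: is_trop_type_def)
  obtain \<sigma> where \<sigma>: "bij_betw \<sigma> ?V {..<card ?V}"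
    using finite_same_card_bij[OF fV, of "{..<card ?V}"] by auto
  obtain \<tau> where \<tau>: "bij_betw \<tau> ?E {..<card ?E}"
    using finite_same_card_bij[OF fE, of "{..<card ?E}"] by auto
  have si: "inj_on \<sigma> ?V" and ti: "inj_on \<tau> ?E" using \<sigma> \<tau> by (auto simp: bij_betw_def)
  have sV: "\<sigma> ` ?V \<subseteq> {..<M}" using \<sigma> cV by (auto simp: bij_betw_def)
  have tE: "\<tau> ` ?E \<subseteq> {..<M}" using \<tau> cE by (auto simp: bij_betw_def)
  define ie where "ie e' = inv_into ?E \<tau> e'" for e'
  define iv where "iv v' = inv_into ?V \<sigma> v'" for v'
  define T' where "T' = \<lparr>tverts = \<sigma> ` ?V, tedges = \<tau> ` ?E, tunb = \<tau> ` tunb T,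
     tends = (\<lambda>e'. if e' < M then (if e' \<in> \<tau> ` ?E then \<sigma> ` tends T (ie e') else {}) else undefined),
     twt = (\<lambda>e'. if e' < M then (if e' \<in> \<tau> ` ?E then twt T (ie e') else 0) else undefined),
     tdir = (\<lambda>v'. if v' < M then (\<lambda>e'. if e' < M then
              (if e' \<in> \<tau> ` ?E \<and> v' \<in> \<sigma> ` tends T (ie e') then tdir T (iv v') (ie e') else 0)
              else undefined) else undefined)\<rparr>"
  have ie: "ie (\<tau> e) = e" if "e \<in> ?E" for e using ti that by (simp add: ie_def)
  have iv: "iv (\<sigma> v) = v" if "v \<in> ?V" for v using si that by (simp add: iv_def)
  have ieE: "ie e' \<in> ?E" if "e' \<in> \<tau> ` ?E" for e' using that by (auto simp: ie_def inv_into_into)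
  have iso: "type_iso T T'"
    unfolding type_iso_def
  proof (intro exI conjI ballI)
    show "bij_betw \<sigma> ?V (tverts T')" using si by (simp add: T'_def bij_betw_imageI)
    show "bij_betw \<tau> ?E (tedges T')" using ti by (simp add: T'_def bij_betw_imageI)
    show "\<tau> ` tunb T = tunb T'" by (simp add: T'_def)
    fix e assume e: "e \<in> ?E"
    have lt: "\<tau> e < M" using tE e by auto
    show "tends T' (\<tau> e) = \<sigma> ` tends T e" using lt e by (simp add: T'_def ie)
    show "twt T' (\<tau> e) = twt T e" using lt e by (simp add: T'_def ie)
    fix v assume v: "v \<in> tends T e"
    have vV: "v \<in> ?V" using sub[OF e] v by auto
    have lv: "\<sigma> v < M" using sV vV by auto
    show "tdir T' (\<sigma> v) (\<tau> e) = tdir T v e" using lt lv e v vV by (simp add: T'_def ie iv)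
  qed
  have m1: "tends T' \<in> {..<M} \<rightarrow>\<^sub>E Pow {..<M}"
  proof -
    have "\<sigma> ` tends T (ie e') \<subseteq> {..<M}" if "e' \<in> \<tau> ` ?E" for e'
      using sub[OF ieE[OF that]] sV by auto
    then show ?thesis by (auto simp: T'_def PiE_iff extensional_def)
  qed
  have m2: "twt T' \<in> {..<M} \<rightarrow>\<^sub>E {..W}"
    using wt ieE by (auto simp: T'_def PiE_iff extensional_def)
  have m3: "tdir T' \<in> {..<M} \<rightarrow>\<^sub>E ({..<M} \<rightarrow>\<^sub>E B)"
  proof -
    have "tdir T (iv v') (ie e') \<in> B" if h1: "e' \<in> \<tau> ` ?E" and h2: "v' \<in> \<sigma> ` tends T (ie e')" for v' e'
    proof -
      obtain y where y: "y \<in> tends T (ie e')" "v' = \<sigma> y" using h2 by auto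
      have "y \<in> ?V" using sub[OF ieE[OF h1]] y by auto
      then have "iv v' = y" using y iv by simp
      then show ?thesis using dir ieE[OF h1] y by auto
    qed
    then show ?thesis using B0 by (auto simp: T'_def PiE_iff extensional_def)
  qed
  have "tverts T' \<subseteq> {..<M}" "tedges T' \<subseteq> {..<M}" "tunb T' \<subseteq> {..<M}"
    using sV tE image_mono[OF UE, of \<tau>] by (auto simp: T'_def)
  with iso m1 m2 m3 show ?thesis by blast
qed

lemma finite_box: "finite {x :: int ^ ('n::finite). \<forall>j. \<bar>x $ j\<bar> \<le> K}"
proof (rule finite_subset)
  show "{x :: int ^ 'n. \<forall>j. \<bar>x $ j\<bar> \<le> K} \<subseteq> vec_lambda ` (UNIV \<rightarrow>\<^sub>E {-K..K})"
  proof
    fix x :: "int ^ 'n" assume "x \<in> {x. \<forall>j. \<bar>x $ j\<bar> \<le> K}"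
    then have "\<forall>j. x $ j \<in> {-K..K}" by (simp add: abs_le_iff) (metis add.inverse_inverse neg_le_iff_le)
    then have "(\<lambda>j. x $ j) \<in> UNIV \<rightarrow>\<^sub>E {-K..K}" by (auto simp: PiE_iff)
    moreover have "x = vec_lambda (\<lambda>j. x $ j)" by simp
    ultimately show "x \<in> vec_lambda ` (UNIV \<rightarrow>\<^sub>E {-K..K})" by blast
  qed
  show "finite (vec_lambda ` (UNIV \<rightarrow>\<^sub>E {-K..K}))" by (intro finite_imageI finite_PiE) auto
qed

lemma finite_class:
  fixes B :: "(int ^ ('n::finite)) set"
  assumes "finite B"
  shows "finite {T :: 'n trop_type. tverts T \<subseteq> {..<M} \<and> tedges T \<subseteq> {..<M} \<and> tunb T \<subseteq> {..<M}
     \<and> tends T \<in> {..<M} \<rightarrow>\<^sub>E Pow {..<M} \<and> twt T \<in> {..<M} \<rightarrow>\<^sub>E {..W}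
     \<and> tdir T \<in> {..<M} \<rightarrow>\<^sub>E ({..<M} \<rightarrow>\<^sub>E B)}" (is "finite ?S")
proof (rule finite_subset)
  let ?f = "\<lambda>(a, b, c, d, e, f). \<lparr>tverts = a, tedges = b, tunb = c, tends = d, twt = e, tdir = f\<rparr>"
  let ?A = "Pow {..<M} \<times> Pow {..<M} \<times> Pow {..<M} \<times> ({..<M} \<rightarrow>\<^sub>E Pow {..<M}) \<times>
             ({..<M} \<rightarrow>\<^sub>E {..W}) \<times> ({..<M} \<rightarrow>\<^sub>E ({..<M} \<rightarrow>\<^sub>E B))"
  show "?S \<subseteq> ?f ` ?A"
  proof
    fix T :: "'n trop_type" assume T: "T \<in> ?S"
    have "T = ?f (tverts T, tedges T, tunb T, tends T, twt T, tdir T)" by (cases T) simp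
    moreover have "(tverts T, tedges T, tunb T, tends T, twt T, tdir T) \<in> ?A" using T by auto
    ultimately show "T \<in> ?f ` ?A" by blast
  qed
  show "finite (?f ` ?A)" using assms by (intro finite_imageI finite_cartesian_product finite_PiE) auto
qed

theorem proposition2p1:
  fixes \<Delta> :: "int ^ 'n \<Rightarrow> nat" and g :: nat
  assumes "CARD('n) \<ge> 2"
  shows "\<exists>S :: 'n trop_type set. finite S \<and>
           (\<forall>T. is_trop_type T \<and> realizable T \<and> has_degree \<Delta> T \<and> trop_genus T = int g
                \<longrightarrow> (\<exists>T'\<in>S. type_iso T T'))"
proof (cases "finite (suppD \<Delta>)")
  case False
  have "\<not> (is_trop_type T \<and> has_degree \<Delta> T)" for T :: "'n trop_type"
    using deg_facts(2)[of T \<Delta>] False by blast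
  then show ?thesis by (intro exI[of _ "{}"]) auto
next
  case True
  define d where "d = (\<Sum>v\<in>suppD \<Delta>. \<Delta> v)"
  define K where "K = int d * Kmax \<Delta> + Kmax \<Delta>"
  define Nv where "Nv = 2 * g + d + 1"
  define M where "M = Nv + (Nv + g + d) + nat K + 1"
  define B where "B = {x :: int ^ 'n. \<forall>j. \<bar>x $ j\<bar> \<le> K}"
  define S where "S = {T :: 'n trop_type. tverts T \<subseteq> {..<M} \<and> tedges T \<subseteq> {..<M} \<and> tunb T \<subseteq> {..<M}
     \<and> tends T \<in> {..<M} \<rightarrow>\<^sub>E Pow {..<M} \<and> twt T \<in> {..<M} \<rightarrow>\<^sub>E {..nat K}
     \<and> tdir T \<in> {..<M} \<rightarrow>\<^sub>E ({..<M} \<rightarrow>\<^sub>E B)}"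
  have K0: "K \<ge> 0" using Kmax_nonneg[of \<Delta>] by (simp add: K_def)
  have finS: "finite S" unfolding S_def B_def by (rule finite_class[OF finite_box])
  have "\<exists>T'\<in>S. type_iso T T'"
    if tt: "is_trop_type T" and re: "realizable T" and hd: "has_degree \<Delta> T" and gen: "trop_genus T = int g"
    for T :: "'n trop_type"
  proof -
    obtain h where hc: "is_trop_curve T h" using re by (auto simp: realizable_def)
    have cU: "card (tunb T) \<le> d" using deg_facts(3)[OF tt hd] by (simp add: d_def)
    have cV: "card (tverts T) \<le> Nv" using vert_edge_bound(1)[OF tt gen] cU by (simp add: Nv_def)
    have cE: "card (tedges T) \<le> Nv + g + d" using vert_edge_bound(2)[OF tt gen] cU cV by linarith
    have cb: "\<bar>int (twt T e) * tdir T x e $ j\<bar> \<le> K" if "e \<in> tedges T" "x \<in> tends T e" for e x j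
      using coord_bound[OF tt hc hd that] by (simp add: K_def d_def)
    have dirB: "\<forall>e\<in>tedges T. \<forall>v\<in>tends T e. tdir T v e \<in> B"
    proof (intro ballI)
      fix e v assume e: "e \<in> tedges T" and v: "v \<in> tends T e"
      have w: "twt T e \<ge> 1" using tt e by (auto simp: is_trop_type_def)
      have "\<bar>tdir T v e $ j\<bar> \<le> K" for j
      proof -
        have "\<bar>tdir T v e $ j\<bar> \<le> int (twt T e) * \<bar>tdir T v e $ j\<bar>"
          using w by (simp add: mult_le_cancel_right1)
        also have "\<dots> = \<bar>int (twt T e) * tdir T v e $ j\<bar>" by (simp add: abs_mult)
        finally show ?thesis using cb[OF e v, of j] by linarith
      qed
      then show "tdir T v e \<in> B" by (simp add: B_def)
    qed
    have wt: "\<forall>e\<in>tedges T. twt T e \<le> nat K"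
    proof
      fix e assume e: "e \<in> tedges T"
      have "card (tends T e) \<noteq> 0"
        using tt e by (cases "e \<in> tunb T") (auto simp: is_trop_type_def bounded_edges_def)
      then obtain v where v: "v \<in> tends T e" by fastforce
      have "primitive_vec (tdir T v e)" using tt e v by (auto simp: is_trop_type_def)
      then have "tdir T v e \<noteq> 0" by (rule prim_nz)
      then obtain j where j: "tdir T v e $ j \<noteq> 0" by (auto simp: vec_eq_iff)
      have "int (twt T e) \<le> int (twt T e) * \<bar>tdir T v e $ j\<bar>"
        using j by (simp add: mult_le_cancel_left1) linarith
      also have "\<dots> = \<bar>int (twt T e) * tdir T v e $ j\<bar>" by (simp add: abs_mult)
      finally show "twt T e \<le> nat K" using cb[OF e v, of j] by linarith
    qed
    have "0 \<in> B" using K0 by (simp add: B_def)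
    from normalize[OF tt _ _ wt dirB this, of M] cV cE
    obtain T' where "type_iso T T'" "T' \<in> S" unfolding S_def M_def by fastforce
    then show ?thesis by blast
  qed
  with finS show ?thesis by blast
qed

end
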